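(* With the notation of the context, assume in addition that the distribution of $\tilde a$ is continuous. Then the equation \[ \Phi(L):=\int_{\mu_{\min}}^{\mu_{\max}}\mu\,\frac{1-\beta L\tilde h(\mu)}{1+L\tilde h(\mu)}\,dF_1(\mu\mid L)=0 \] has at least one solution $L$ in the interval $\big[1/(\beta\tilde h(\mu_{\min})),\,1/(\beta\tilde h(\mu_{\max}))\big]$, and has no solution $L>0$ outside this interval.
   Context: Fix $0<\mu_{\min}<\mu_{\max}<\infty$ and $\beta>0$. Let $f$ (utility of idleness) be concave, increasing, twice continuously differentiable, and $c$ (effort cost) convex, increasing, twice continuously differentiable with $0<c_{\min}\le c'(\mu)\le c_{\max}<\infty$ on $[\mu_{\min},\mu_{\max}]$. Let $h>0$ on $[\mu_{\min},\mu_{\max}]$ and $\tilde h(\mu)=h(\mu)/\mu$, assumed convex and strictly decreasing with $2\tilde h'(\mu)^2\le\tilde h(\mu)\tilde h''(\mu)$. A random triple $(\tilde\mu_{\min},\tilde\mu_{\max},\tilde a)$ satisfies $\mu_{\min}\le\tilde\mu_{\min}\le\tilde\mu_{\max}\le\mu_{\max}$ and $0<a_{\min}\le\tilde a\le a_{\max}<\infty$ a.s. For $L>0$ let $C(\mu,L)=-\frac{L f'((1+L\tilde h(\mu))^{-1})\tilde h'(\mu)}{(1+L\tilde h(\mu))^2c'(\mu)}$ and $F_1(\mu\mid L)=\mathbb P(\tilde\mu_{\max}\le\mu)+\mathbb P(\tilde\mu_{\max}>\mu,\ \tilde\mu_{\min}<\mu,\ \tilde a\ge C(\mu,L))$. 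*)

theory Defs
  imports "HOL-Probability.Probability"
begin

text \<open>The threshold C(mu,L); f', ht = h/mu, ht', c' are passed explicitly.\<close>
definition Cthr ::
  "(real \<Rightarrow> real) \<Rightarrow> (real \<Rightarrow> real) \<Rightarrow> (real \<Rightarrow> real) \<Rightarrow> (real \<Rightarrow> real) \<Rightarrow> real \<Rightarrow> real \<Rightarrow> real"
  where "Cthr f' ht ht' c' mu L =
     - (L * f' (inverse (1 + L * ht mu)) * ht' mu) / ((1 + L * ht mu)\<^sup>2 * c' mu)"

text \<open>F_1(mu | L), for a given threshold function Cf = (\<lambda>mu. C(mu,L)).\<close>
definition F1 ::
  "'w measure \<Rightarrow> ('w \<Rightarrow> real) \<Rightarrow> ('w \<Rightarrow> real) \<Rightarrow> ('w \<Rightarrow> real) \<Rightarrow> (real \<Rightarrow> real) \<Rightarrow> real \<Rightarrow> real"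
  where "F1 M mmin mmax A Cf mu =
     measure M {w \<in> space M. mmax w \<le> mu}
   + measure M {w \<in> space M. mmax w > mu \<and> mmin w < mu \<and> A w \<ge> Cf mu}"

definition stieltjes_measure :: "(real \<Rightarrow> real) \<Rightarrow> real measure"
  where "stieltjes_measure F = interval_measure (\<lambda>x. Lim (at_right x) F)"

end

theory Submission
  imports Defs
begin

lemma dq_right:
  fixes g :: "real \<Rightarrow> real"
  assumes "(g has_real_derivative D) (at x within S)" "x < y" "{x..y} \<subseteq> S"
    "\<And>z. x < z \<Longrightarrow> z \<le> y \<Longrightarrow> g z \<le> g x"
  shows "D \<le> 0"
proof -
  have "((\<lambda>z. (g z - g x) / (z - x)) \<longlongrightarrow> D) (at x within {x<..y})"
    using tendsto_within_subset[OF assms(1)[unfolded has_field_derivative_iff], of "{x<..y}"] assms(3)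
    by (meson greaterThanAtMost_iff atLeastAtMost_iff less_imp_le subset_iff)
  moreover have "at x within {x<..y} \<noteq> bot"
    using assms(2) by (simp add: at_within_eq_bot_iff)
  moreover have "eventually (\<lambda>z. (g z - g x) / (z - x) \<le> 0) (at x within {x<..y})"
    using assms(4) by (auto simp: eventually_at_filter divide_nonpos_pos intro!: always_eventually)
  ultimately show ?thesis by (metis tendsto_upperbound)
qed

lemma dq_left:
  fixes g :: "real \<Rightarrow> real"
  assumes "(g has_real_derivative D) (at x within S)" "y < x" "{y..x} \<subseteq> S"
    "\<And>z. y \<le> z \<Longrightarrow> z < x \<Longrightarrow> g z \<le> g x"
  shows "D \<ge> 0"
proof -
  have "((\<lambda>z. (g z - g x) / (z - x)) \<longlongrightarrow> D) (at x within {y..<x})"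
    using tendsto_within_subset[OF assms(1)[unfolded has_field_derivative_iff], of "{y..<x}"] assms(3)
    by (meson atLeastLessThan_iff atLeastAtMost_iff less_imp_le subset_iff)
  moreover have "at x within {y..<x} \<noteq> bot"
    using assms(2) by (simp add: at_within_eq_bot_iff)
  moreover have "eventually (\<lambda>z. (g z - g x) / (z - x) \<ge> 0) (at x within {y..<x})"
    using assms(4) by (auto simp: eventually_at_filter divide_nonpos_neg intro!: always_eventually)
  ultimately show ?thesis by (metis tendsto_lowerbound)
qed

lemma measure_conv:
  assumes P: "prob_space M" and S: "\<And>n. {w\<in>space M. P n w} \<in> sets M"
    and Q: "{w\<in>space M. Q w} \<in> sets M"
    and ev: "AE w in M. eventually (\<lambda>n. P n w = Q w) sequentially"
  shows "(\<lambda>n. measure M {w\<in>space M. P n w}) \<longlonglongrightarrow> measure M {w\<in>space M. Q w}"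
proof -
  interpret prob_space M by fact
  have eq: "measure M {w\<in>space M. R w} = integral\<^sup>L M (indicator {w\<in>space M. R w})" for R
    by (simp add: Int_absorb2 subsetI)
  show ?thesis unfolding eq
  proof (rule integral_dominated_convergence[where w="\<lambda>_. 1"])
    show "indicator {w \<in> space M. Q w} \<in> borel_measurable M" using Q by simp
    show "indicator {w \<in> space M. P n w} \<in> borel_measurable M" for n using S by simp
    show "integrable M (\<lambda>_. 1::real)" by simp
    show "AE x in M. norm (indicator {w \<in> space M. P n w} x :: real) \<le> 1" for n
      by (auto simp: indicator_def)
    show "AE x in M. (\<lambda>n. indicator {w \<in> space M. P n w} x :: real) \<longlonglongrightarrow> indicator {w \<in> space M. Q w} x"
      using ev
    proof eventually_elim
      case (elim x)
      then have "eventually (\<lambda>n. indicator {w \<in> space M. Q w} x = (indicator {w \<in> space M. P n w} x :: real)) sequentially"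
        by eventually_elim (auto simp: indicator_def)
      then show ?case by (rule Lim_transform_eventually[OF tendsto_const])
    qed
  qed
qed

lemma convex_deriv_mono:
  fixes \<phi> :: "real \<Rightarrow> real"
  assumes cv: "convex_on S \<phi>" and dx: "(\<phi> has_real_derivative dx) (at x within S)"
    and dy: "(\<phi> has_real_derivative dy) (at y within S)"
    and xy: "x < y" and sub: "{x..y} \<subseteq> S"
  shows "dx \<le> dy"
proof -
  define s where "s = (\<phi> y - \<phi> x) / (y - x)"
  have cv': "convex_on {x..y} \<phi>" using convex_on_subset[OF cv sub] by (simp add: convex_real_interval)
  have chord: "\<phi> z \<le> s * (z - x) + \<phi> x" if "x \<le> z" "z \<le> y" for z
    using convex_onD_Icc'[OF cv', of z] that unfolding s_def by auto
  have d1: "((\<lambda>z. \<phi> z - s * z) has_real_derivative dx - s) (at x within S)"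
    by (auto intro!: derivative_eq_intros dx)
  have d2: "((\<lambda>z. \<phi> z - s * z) has_real_derivative dy - s) (at y within S)"
    by (auto intro!: derivative_eq_intros dy)
  have "dx - s \<le> 0"
    by (rule dq_right[OF d1 xy sub]) (use chord in \<open>auto simp: algebra_simps\<close>)
  moreover have "dy - s \<ge> 0"
  proof (rule dq_left[OF d2 xy sub])
    fix z assume "x \<le> z" "z < y"
    with chord[of z] have "\<phi> z \<le> s * (z - x) + \<phi> x" by auto
    moreover have "s * (y - x) = \<phi> y - \<phi> x" using xy unfolding s_def by auto
    ultimately show "\<phi> z - s * z \<le> \<phi> y - s * y" by (auto simp: algebra_simps)
  qed
  ultimately show ?thesis by simp
qed

locale p2setup =
  fixes M :: "'w measure" and mmin mmax A :: "'w \<Rightarrow> real" and mu_min mu_max beta :: real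
    and f f' f'' c c' c'' h ht' ht'' :: "real \<Rightarrow> real"
  assumes mu_bounds: "0 < mu_min" "mu_min < mu_max"
    and beta_pos: "beta > 0"
    and f_concave: "concave_on {0..1} f"
    and f_mono: "mono_on {0..1} f"
    and f_d1: "\<forall>x\<in>{0..1}. (f has_real_derivative f' x) (at x within {0..1})"
    and f_d2: "\<forall>x\<in>{0..1}. (f' has_real_derivative f'' x) (at x within {0..1})"
    and c_convex: "convex_on {mu_min..mu_max} c"
    and c_d1: "\<forall>x\<in>{mu_min..mu_max}. (c has_real_derivative c' x) (at x within {mu_min..mu_max})"
    and c_d2: "\<forall>x\<in>{mu_min..mu_max}. (c' has_real_derivative c'' x) (at x within {mu_min..mu_max})"
    and c'_pos: "\<forall>x\<in>{mu_min..mu_max}. 0 < c' x"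
    and h_pos: "\<forall>x\<in>{mu_min..mu_max}. h x > 0"
    and ht_d1: "\<forall>x\<in>{mu_min..mu_max}. ((\<lambda>m. h m / m) has_real_derivative ht' x) (at x within {mu_min..mu_max})"
    and ht_d2: "\<forall>x\<in>{mu_min..mu_max}. (ht' has_real_derivative ht'' x) (at x within {mu_min..mu_max})"
    and ht_strict_dec: "\<forall>x\<in>{mu_min..mu_max}. \<forall>y\<in>{mu_min..mu_max}. x < y \<longrightarrow> h y / y < h x / x"
    and ht_cond: "\<forall>x\<in>{mu_min..mu_max}. 2 * (ht' x)\<^sup>2 \<le> (h x / x) * ht'' x"
    and P: "prob_space M"
    and meas: "mmin \<in> borel_measurable M" "mmax \<in> borel_measurable M" "A \<in> borel_measurable M"
    and triple_bounds: "AE w in M. mu_min \<le> mmin w \<and> mmin w \<le> mmax w \<and> mmax w \<le> mu_max"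
    and A_continuous: "\<forall>x. measure M {w \<in> space M. A w = x} = 0"
begin

abbreviation "D \<equiv> {mu_min..mu_max}"

definition C :: "real \<Rightarrow> real \<Rightarrow> real" where
  "C L x = Cthr f' (\<lambda>m. h m / m) ht' c' x L"

definition k :: "real \<Rightarrow> real \<Rightarrow> real" where
  "k L x = - ht' x / (1 + L * (h x / x))\<^sup>2"

lemma ht_pos: "x \<in> D \<Longrightarrow> h x / x > 0"
  using h_pos mu_bounds by auto

lemma cont_ht: "continuous_on D (\<lambda>m. h m / m)"
  by (rule DERIV_continuous_on) (use ht_d1 in auto)
lemma cont_ht': "continuous_on D ht'"
  by (rule DERIV_continuous_on) (use ht_d2 in auto)
lemma cont_c': "continuous_on D c'"
  by (rule DERIV_continuous_on) (use c_d2 in auto)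
lemma cont_f': "continuous_on {0..1} f'"
  by (rule DERIV_continuous_on) (use f_d2 in auto)

lemma ht''_nonneg: "x \<in> D \<Longrightarrow> ht'' x \<ge> 0"
proof (rule ccontr)
  assume x: "x \<in> D" and neg: "\<not> ht'' x \<ge> 0"
  have "(h x / x) * ht'' x < 0" using ht_pos[OF x] neg mult_pos_neg by (metis not_le)
  moreover have "2 * (ht' x)\<^sup>2 \<ge> 0" by simp
  moreover have "2 * (ht' x)\<^sup>2 \<le> h x / x * ht'' x" using ht_cond x by blast
  ultimately show False by linarith
qed

lemma ht'_nonpos: assumes "x \<in> D" "x < mu_max" shows "ht' x \<le> 0"
proof (rule dq_right[where g="\<lambda>m. h m / m" and S=D and y=mu_max])
  show "((\<lambda>m. h m / m) has_real_derivative ht' x) (at x within D)" using ht_d1 assms by auto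
  show "x < mu_max" by fact
  show "{x..mu_max} \<subseteq> D" using assms by auto
  show "h z / z \<le> h x / x" if "x < z" "z \<le> mu_max" for z
    using ht_strict_dec assms that by force
qed

lemma f'_nonneg: assumes "0 \<le> u" "u < 1" shows "f' u \<ge> 0"
proof -
  have "- f' u \<le> 0"
  proof (rule dq_right[where g="\<lambda>z. - f z" and S="{0..1}" and y=1])
    show "((\<lambda>z. - f z) has_real_derivative - f' u) (at u within {0..1})"
      using f_d1 assms by (auto intro!: derivative_eq_intros)
    show "u < 1" by fact
    show "{u..1} \<subseteq> {0..1}" using assms by auto
    show "- f z \<le> - f u" if "u < z" "z \<le> 1" for z
      using mono_onD[OF f_mono, of u z] assms that by auto
  qed
  then show ?thesis by simp
qed

lemma f'_anti: assumes "0 \<le> u" "u \<le> v" "v \<le> 1" shows "f' v \<le> f' u"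
proof (cases "u = v")
  case False
  have "- f' u \<le> - f' v"
  proof (rule convex_deriv_mono[where \<phi>="\<lambda>z. - f z" and S="{0..1}"])
    show "convex_on {0..1} (\<lambda>z. - f z)" using f_concave by (simp add: concave_on_def)
    show "((\<lambda>z. - f z) has_real_derivative - f' u) (at u within {0..1})"
      using f_d1 assms by (auto intro!: derivative_eq_intros)
    show "((\<lambda>z. - f z) has_real_derivative - f' v) (at v within {0..1})"
      using f_d1 assms by (auto intro!: derivative_eq_intros)
    show "u < v" using False assms by auto
    show "{u..v} \<subseteq> {0..1}" using assms by auto
  qed
  then show ?thesis by simp
qed simp

lemma c'_mono: assumes "x \<in> D" "y \<in> D" "x \<le> y" shows "c' x \<le> c' y"
proof (cases "x = y")
  case False
  show ?thesis
  proof (rule convex_deriv_mono[where \<phi>=c and S=D])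
    show "convex_on D c" by (rule c_convex)
    show "(c has_real_derivative c' x) (at x within D)" using c_d1 assms by auto
    show "(c has_real_derivative c' y) (at y within D)" using c_d1 assms by auto
    show "x < y" using False assms by auto
    show "{x..y} \<subseteq> D" using assms by auto
  qed
qed simp

end

context p2setup begin

lemma den_pos: "L \<ge> 0 \<Longrightarrow> x \<in> D \<Longrightarrow> 1 + L * (h x / x) > 0"
  using mult_nonneg_nonneg[of L "h x / x"] ht_pos[of x] by linarith

lemma k_cont: "L \<ge> 0 \<Longrightarrow> continuous_on D (k L)"
  unfolding k_def
  by (intro continuous_intros cont_ht' cont_ht) (use den_pos in force)

lemma k_anti: assumes L: "L > 0" and xy: "mu_min \<le> x" "x \<le> y" "y < mu_max" shows "k L y \<le> k L x"
proof (rule DERIV_nonpos_imp_decreasing_open[of x y "k L"])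
  show "x \<le> y" by fact
  show "continuous_on {x..y} (k L)"
    by (rule continuous_on_subset[OF k_cont]) (use L xy in auto)
  fix z assume z: "x < z" "z < y"
  then have zD: "z \<in> D" and at: "at z within D = at z" using xy by (auto intro!: at_within_Icc_at)
  have d1: "((\<lambda>m. h m / m) has_real_derivative ht' z) (at z)" using ht_d1 zD at by metis
  have d2: "(ht' has_real_derivative ht'' z) (at z)" using ht_d2 zD at by metis
  define t where "t = h z / z"
  have tpos: "t > 0" using ht_pos zD t_def by auto
  have dpos: "1 + L * t > 0" using tpos L by (simp add: add_pos_pos)
  have "(k L has_real_derivative (- ht'' z * (1 + L * t) + 2 * L * (ht' z)\<^sup>2) / (1 + L * t) ^ 3) (at z)"
  proof -
    have d3: "((\<lambda>m. 1 + L * (h m / m)) has_real_derivative L * ht' z) (at z)"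
      using DERIV_add[OF DERIV_const[of 1] DERIV_cmult[OF d1, of L]] by simp
    have d4: "((\<lambda>m. (1 + L * (h m / m))^2) has_real_derivative 2 * ((L * ht' z) * (1 + L * t))) (at z)"
      using DERIV_power[OF d3, of 2] t_def by simp
    have d5: "((\<lambda>m. - ht' m) has_real_derivative - ht'' z) (at z)"
      using DERIV_minus[OF d2] .
    have "(k L has_real_derivative (- ht'' z * (1 + L * t)^2 - (- ht' z) * (2 * ((L * ht' z) * (1 + L * t)))) / ((1 + L * t)^2 * (1 + L * t)^2)) (at z)"
      unfolding k_def using DERIV_divide[OF d5 d4] dpos t_def by simp
    moreover have "(- p * d^2 - (- q) * (2 * ((L * q) * d))) / (d^2 * d^2) = (- p * d + 2 * L * q\<^sup>2) / d ^ 3"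
      if "d \<noteq> 0" for d p q :: real
      using that by (simp add: field_simps power2_eq_square power3_eq_cube)
    ultimately show ?thesis using dpos by (metis less_irrefl)
  qed
  moreover have "(- ht'' z * (1 + L * t) + 2 * L * (ht' z)\<^sup>2) / (1 + L * t) ^ 3 \<le> 0"
  proof -
    have "2 * (ht' z)\<^sup>2 \<le> t * ht'' z" using ht_cond zD t_def by auto
    then have "2 * L * (ht' z)\<^sup>2 \<le> L * t * ht'' z" using L
      by (metis mult.assoc mult.commute mult_left_mono less_imp_le)
    moreover have "ht'' z \<ge> 0" using ht''_nonneg zD by auto
    ultimately have "- ht'' z * (1 + L * t) + 2 * L * (ht' z)\<^sup>2 \<le> 0" by (simp add: algebra_simps)
    then show ?thesis using dpos by (simp add: divide_nonpos_pos)
  qed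
  ultimately show "\<exists>y. (k L has_real_derivative y) (at z) \<and> y \<le> 0" by blast
qed

end

context p2setup begin

lemma den_ne: "L \<ge> 0 \<Longrightarrow> x \<in> D \<Longrightarrow> 1 + L * (h x / x) \<noteq> 0"
  using den_pos by (metis less_irrefl)

lemma C_eq: "x \<in> D \<Longrightarrow> L \<ge> 0 \<Longrightarrow> C L x = L * f' (inverse (1 + L * (h x / x))) * k L x / c' x"
  unfolding C_def Cthr_def k_def by (simp add: field_simps)

lemma u_range: assumes "x \<in> D" "L > 0" shows "0 \<le> inverse (1 + L * (h x / x))" "inverse (1 + L * (h x / x)) < 1"
proof -
  have "L * (h x / x) > 0" using ht_pos[OF assms(1)] assms(2) by (intro mult_pos_pos)
  then show "0 \<le> inverse (1 + L * (h x / x))" "inverse (1 + L * (h x / x)) < 1"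
    by (auto simp: inverse_less_1_iff)
qed

lemma C_anti: assumes L: "L > 0" and xy: "mu_min \<le> x" "x \<le> y" "y < mu_max" shows "C L y \<le> C L x"
proof -
  have xD: "x \<in> D" and yD: "y \<in> D" using xy by auto
  have htle: "h y / y \<le> h x / x"
    using ht_strict_dec xD yD xy by (cases "x = y") (auto simp: less_imp_le)
  have dle: "1 + L * (h y / y) \<le> 1 + L * (h x / x)" using mult_left_mono[OF htle] L by (intro add_left_mono) auto
  have uxy: "inverse (1 + L * (h x / x)) \<le> inverse (1 + L * (h y / y))"
    by (rule le_imp_inverse_le[OF dle]) (use den_pos yD L in auto)
  have ay: "0 \<le> f' (inverse (1 + L * (h y / y)))" using f'_nonneg u_range[OF yD L] by auto
  have axy: "f' (inverse (1 + L * (h y / y))) \<le> f' (inverse (1 + L * (h x / x)))"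
    by (rule f'_anti) (use u_range[OF xD L] u_range[OF yD L] uxy in auto)
  have ky: "0 \<le> k L y" unfolding k_def using ht'_nonpos[OF yD xy(3)] by (simp add: divide_nonpos_nonneg del: times_divide_eq_right)
  have kxy: "k L y \<le> k L x" by (rule k_anti[OF L xy])
  have num: "L * f' (inverse (1 + L * (h y / y))) * k L y \<le> L * f' (inverse (1 + L * (h x / x))) * k L x"
    using L ay axy ky kxy by (intro mult_mono mult_left_mono) auto
  have numpos: "0 \<le> L * f' (inverse (1 + L * (h y / y))) * k L y" using L ay ky by simp
  have cxy: "c' x \<le> c' y" using c'_mono xD yD xy by auto
  have cx: "0 < c' x" using c'_pos xD by auto
  have "L * f' (inverse (1 + L * (h y / y))) * k L y / c' y \<le> L * f' (inverse (1 + L * (h x / x))) * k L x / c' x"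
    by (rule frac_le[OF _ num cx cxy]) (use numpos num in linarith)
  then show ?thesis using C_eq xD yD L by simp
qed

lemma C_cont_x: assumes L: "L > 0" shows "continuous_on D (C L)"
proof -
  have cu: "continuous_on D (\<lambda>x. inverse (1 + L * (h x / x)))"
    by (intro cont_ht continuous_intros ballI den_ne) (use L in auto)
  have img: "(\<lambda>x. inverse (1 + L * (h x / x))) ` D \<subseteq> {0..1}"
    using u_range L by (auto simp: less_imp_le)
  have cf: "continuous_on D (\<lambda>x. f' (inverse (1 + L * (h x / x))))"
    by (rule continuous_on_compose2[OF cont_f' cu img])
  have "continuous_on D (\<lambda>x. - (L * f' (inverse (1 + L * (h x / x))) * ht' x) / ((1 + L * (h x / x))\<^sup>2 * c' x))"
    apply (intro cf cont_ht' cont_ht cont_c' continuous_intros)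
    using den_pos L c'_pos by (metis less_imp_le mult_pos_pos zero_less_power order_less_irrefl)
  then show ?thesis unfolding C_def Cthr_def by simp
qed

lemma C_cont_L: assumes x: "x \<in> D" shows "continuous_on {0<..} (\<lambda>L. C L x)"
proof -
  have cu: "continuous_on {0<..} (\<lambda>L. inverse (1 + L * (h x / x)))"
    by (intro continuous_intros ballI den_ne x) auto
  have img: "(\<lambda>L. inverse (1 + L * (h x / x))) ` {0<..} \<subseteq> {0..1}"
    using u_range x by (auto simp: less_imp_le)
  have cf: "continuous_on {0<..} (\<lambda>L. f' (inverse (1 + L * (h x / x))))"
    by (rule continuous_on_compose2[OF cont_f' cu img])
  have "continuous_on {0<..} (\<lambda>L. - (L * f' (inverse (1 + L * (h x / x))) * ht' x) / ((1 + L * (h x / x))\<^sup>2 * c' x))"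
    apply (intro continuous_intros cf)
    using den_pos x c'_pos by (metis greaterThan_iff less_imp_le mult_pos_pos zero_less_power order_less_irrefl)
  then show ?thesis unfolding C_def Cthr_def by simp
qed

end

sublocale p2setup \<subseteq> prob_space M by (rule P)

context p2setup begin

declare meas[measurable]

definition PF :: "real \<Rightarrow> real \<Rightarrow> 'w \<Rightarrow> bool" where
  "PF L y w \<longleftrightarrow> mmax w \<le> y \<or> (mmax w > y \<and> mmin w < y \<and> A w \<ge> C L y)"
definition PG :: "real \<Rightarrow> real \<Rightarrow> 'w \<Rightarrow> bool" where
  "PG L x w \<longleftrightarrow> mmax w \<le> x \<or> (mmax w > x \<and> mmin w \<le> x \<and> A w \<ge> C L x)"
definition G :: "real \<Rightarrow> real \<Rightarrow> real" where
  "G L x = measure M {w\<in>space M. PG L x w}"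

lemma PF_sets[measurable]: "{w\<in>space M. PF L y w} \<in> sets M"
  unfolding PF_def by measurable
lemma PG_sets[measurable]: "{w\<in>space M. PG L y w} \<in> sets M"
  unfolding PG_def by measurable

lemma F1_eq: "F1 M mmin mmax A (\<lambda>mu. C L mu) y = measure M {w\<in>space M. PF L y w}"
proof -
  have "{w\<in>space M. PF L y w} = {w \<in> space M. mmax w \<le> y} \<union> {w \<in> space M. mmax w > y \<and> mmin w < y \<and> A w \<ge> C L y}"
    unfolding PF_def by auto
  moreover have "measure M ({w \<in> space M. mmax w \<le> y} \<union> {w \<in> space M. mmax w > y \<and> mmin w < y \<and> A w \<ge> C L y})
     = measure M {w \<in> space M. mmax w \<le> y} + measure M {w \<in> space M. mmax w > y \<and> mmin w < y \<and> A w \<ge> C L y}"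
    by (rule finite_measure_Union) (auto, measurable)
  ultimately show ?thesis unfolding F1_def by simp
qed

lemma AE_A_ne: "AE w in M. A w \<noteq> t"
proof -
  have "{w\<in>space M. A w = t} \<in> sets M" by measurable
  then show ?thesis using prob_Collect_eq_0[of "\<lambda>w. A w = t"] A_continuous by auto
qed

lemma pw_right:
  assumes L: "L > 0" and S: "S \<longlonglongrightarrow> x" "\<forall>n. S n > x"
    and w: "mu_min \<le> mmin w" "mmin w \<le> mmax w" "mmax w \<le> mu_max" "A w \<noteq> C L x"
  shows "eventually (\<lambda>n. PF L (S n) w = PG L x w \<and> PG L (S n) w = PG L x w) sequentially"
proof -
  have evS: "eventually (\<lambda>n. x < S n) sequentially" using S(2) by (simp add: always_eventually)
  show ?thesis
proof (cases "mmax w \<le> x")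
  case True
  then show ?thesis using S(2) by (auto simp: PF_def PG_def less_imp_le intro!: always_eventually
      intro: order_trans)
next
  case False
  then have ev1: "eventually (\<lambda>n. S n < mmax w) sequentially"
    using S(1) by (intro order_tendstoD(2)) auto
  show ?thesis
  proof (cases "mmin w \<le> x")
    case False
    then have "eventually (\<lambda>n. S n < mmin w) sequentially"
      using S(1) by (intro order_tendstoD(2)) auto
    then show ?thesis using ev1
      by eventually_elim (use False w in \<open>auto simp: PF_def PG_def\<close>)
  next
    case True
    have xD: "x \<in> D" using True w \<open>\<not> mmax w \<le> x\<close> by auto
    have evD: "eventually (\<lambda>n. S n \<in> D) sequentially"
      using ev1
    proof eventually_elim
      case (elim n)
      have "x < S n" using S(2) by blast
      then show ?case using elim w xD by auto
    qed
    have lim: "(\<lambda>n. C L (S n)) \<longlonglongrightarrow> C L x"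
      by (rule continuous_on_tendsto_compose[OF C_cont_x[OF L] S(1) xD evD])
    show ?thesis
    proof (cases "A w > C L x")
      case True
      then have "eventually (\<lambda>n. C L (S n) < A w) sequentially"
        using lim by (intro order_tendstoD(2))
      then show ?thesis using ev1
      proof eventually_elim
        case (elim n)
        have "x < S n" using S(2) by blast
        then show ?case using elim True \<open>mmin w \<le> x\<close> \<open>\<not> mmax w \<le> x\<close> by (auto simp: PF_def PG_def)
      qed
    next
      case False
      then have "A w < C L x" using w(4) by auto
      then have "eventually (\<lambda>n. C L (S n) > A w) sequentially"
        using lim by (intro order_tendstoD(1))
      then show ?thesis using ev1
      proof eventually_elim
        case (elim n)
        have "x < S n" using S(2) by blast
        then show ?case using elim \<open>A w < C L x\<close> \<open>mmin w \<le> x\<close> \<open>\<not> mmax w \<le> x\<close> by (auto simp: PF_def PG_def)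
      qed
    qed
  qed
qed
qed

lemma right_lim:
  assumes L: "L > 0" and S: "S \<longlonglongrightarrow> x" "\<forall>n. S n > x"
  shows "(\<lambda>n. measure M {w\<in>space M. PF L (S n) w}) \<longlonglongrightarrow> G L x"
    and "(\<lambda>n. G L (S n)) \<longlonglongrightarrow> G L x"
proof -
  have ae: "AE w in M. eventually (\<lambda>n. PF L (S n) w = PG L x w \<and> PG L (S n) w = PG L x w) sequentially"
    using triple_bounds AE_A_ne[of "C L x"]
    by eventually_elim (rule pw_right[OF L S], auto)
  show "(\<lambda>n. measure M {w\<in>space M. PF L (S n) w}) \<longlonglongrightarrow> G L x"
    unfolding G_def
    by (rule measure_conv[OF P PF_sets PG_sets]) (use ae in \<open>auto elim: AE_mp eventually_mono\<close>)
  show "(\<lambda>n. G L (S n)) \<longlonglongrightarrow> G L x"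
    unfolding G_def
    by (rule measure_conv[OF P PG_sets PG_sets]) (use ae in \<open>auto elim: AE_mp eventually_mono\<close>)
qed

lemma F_tendsto: assumes L: "L > 0"
  shows "(F1 M mmin mmax A (\<lambda>mu. C L mu) \<longlongrightarrow> G L x) (at_right x)"
proof (rule tendsto_at_right_sequentially[of x "x + 1"])
  fix S :: "nat \<Rightarrow> real" assume "\<And>n. x < S n" "S \<longlonglongrightarrow> x"
  then show "(\<lambda>n. F1 M mmin mmax A (\<lambda>mu. C L mu) (S n)) \<longlonglongrightarrow> G L x"
    unfolding F1_eq using right_lim(1)[OF L] by auto
qed simp

lemma G_rcont: assumes L: "L > 0" shows "continuous (at_right x) (G L)"
  unfolding continuous_within
proof (rule tendsto_at_right_sequentially[of x "x + 1"])
  fix S :: "nat \<Rightarrow> real" assume "\<And>n. x < S n" "S \<longlonglongrightarrow> x"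
  then show "(\<lambda>n. G L (S n)) \<longlonglongrightarrow> G L x"
    using right_lim(2)[OF L] by auto
qed simp

lemma G_mono: assumes L: "L > 0" and xy: "x \<le> y" shows "G L x \<le> G L y"
  unfolding G_def
proof (rule finite_measure_mono_AE[OF _ PG_sets])
  show "AE w in M. w \<in> {w \<in> space M. PG L x w} \<longrightarrow> w \<in> {w \<in> space M. PG L y w}"
    using triple_bounds
  proof eventually_elim
    case (elim w)
    show ?case
    proof (intro impI)
      assume "w \<in> {w \<in> space M. PG L x w}"
      then have w: "w \<in> space M" "PG L x w" by auto
      show "w \<in> {w \<in> space M. PG L y w}"
      proof (cases "mmax w \<le> y")
        case True then show ?thesis using w by (auto simp: PG_def)
      next
        case False
        then have "mmax w > x" "mmin w \<le> x" "A w \<ge> C L x" using w xy by (auto simp: PG_def)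
        moreover have "C L y \<le> C L x"
          by (rule C_anti[OF L]) (use elim xy False \<open>mmin w \<le> x\<close> in auto)
        ultimately show ?thesis using w False xy by (auto simp: PG_def)
      qed
    qed
  qed
qed

lemma G_low: "x < mu_min \<Longrightarrow> G L x = 0"
  unfolding G_def
  by (rule prob_eq_0_AE) (use triple_bounds in \<open>eventually_elim, auto simp: PG_def\<close>)

lemma G_high: assumes "mu_max \<le> x" shows "G L x = 1"
  unfolding G_def
proof -
  have "AE w in M. PG L x w" using triple_bounds
    by eventually_elim (use assms in \<open>auto simp: PG_def\<close>)
  then show "measure M {w \<in> space M. PG L x w} = 1"
    using prob_Collect_eq_1[OF PG_sets] by simp
qed

lemma G_bot: "(G L \<longlongrightarrow> 0) at_bot"
proof (rule tendsto_eventually)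
  show "eventually (\<lambda>x. G L x = 0) at_bot"
    unfolding eventually_at_bot_linorder by (rule exI[of _ "mu_min - 1"]) (auto intro: G_low)
qed

lemma G_top: "(G L \<longlongrightarrow> 1) at_top"
proof (rule tendsto_eventually)
  show "eventually (\<lambda>x. G L x = 1) at_top"
    unfolding eventually_at_top_linorder by (rule exI[of _ mu_max]) (auto intro: G_high)
qed

lemma N_real_dist: "L > 0 \<Longrightarrow> real_distribution (interval_measure (G L))"
  by (rule real_distribution_interval_measure) (auto intro: G_mono G_rcont G_bot G_top)

lemma N_cdf: "L > 0 \<Longrightarrow> cdf (interval_measure (G L)) = G L"
  by (rule cdf_interval_measure) (auto intro: G_mono G_rcont G_bot)

lemma stieltjes_eq: assumes L: "L > 0"
  shows "stieltjes_measure (F1 M mmin mmax A (\<lambda>mu. C L mu)) = interval_measure (G L)"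
proof -
  have "(\<lambda>x. Lim (at_right x) (F1 M mmin mmax A (\<lambda>mu. C L mu))) = G L"
    by (rule ext, rule tendsto_Lim) (auto intro: F_tendsto[OF L])
  then show ?thesis unfolding stieltjes_measure_def by simp
qed

lemma G_cont_L:
  assumes Ls: "Ls \<longlonglongrightarrow> L0" "\<forall>n. Ls n > 0" and L0: "L0 > 0"
  shows "(\<lambda>n. G (Ls n) x) \<longlonglongrightarrow> G L0 x"
  unfolding G_def
proof (rule measure_conv[OF P PG_sets PG_sets])
  show "AE w in M. eventually (\<lambda>n. PG (Ls n) x w = PG L0 x w) sequentially"
    using triple_bounds AE_A_ne[of "C L0 x"]
  proof eventually_elim
    case (elim w)
    show ?case
    proof (cases "mmax w \<le> x \<or> \<not> mmin w \<le> x")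
      case True then show ?thesis by (auto simp: PG_def)
    next
      case False
      then have xD: "x \<in> D" using elim by auto
      have lim: "(\<lambda>n. C (Ls n) x) \<longlonglongrightarrow> C L0 x"
        by (rule continuous_on_tendsto_compose[OF C_cont_L[OF xD] Ls(1)]) (use L0 Ls(2) in auto)
      show ?thesis
      proof (cases "A w > C L0 x")
        case True
        then have "eventually (\<lambda>n. C (Ls n) x < A w) sequentially"
          using lim by (intro order_tendstoD(2))
        then show ?thesis by eventually_elim (use True False in \<open>auto simp: PG_def\<close>)
      next
        case F2: False
        then have "A w < C L0 x" using elim by auto
        then have "eventually (\<lambda>n. C (Ls n) x > A w) sequentially"
          using lim by (intro order_tendstoD(1))
        then show ?thesis by eventually_elim (use \<open>A w < C L0 x\<close> False in \<open>auto simp: PG_def\<close>)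
      qed
    qed
  qed
qed

end

context p2setup begin

definition g :: "real \<Rightarrow> real \<Rightarrow> real" where
  "g L m = m * (1 - beta * L * (h m / m)) / (1 + L * (h m / m))"
definition cl :: "real \<Rightarrow> real" where "cl m = max mu_min (min mu_max m)"
definition N :: "real \<Rightarrow> real measure" where "N L = interval_measure (G L)"
definition I :: "real \<Rightarrow> real \<Rightarrow> real" where "I L L' = integral\<^sup>L (N L') (\<lambda>m. g L (cl m))"
definition T :: real where "T = h mu_min / mu_min"
definition T' :: real where "T' = h mu_max / mu_max"

lemma cl_D: "cl m \<in> D" using mu_bounds by (auto simp: cl_def)
lemma cl_id: "m \<in> D \<Longrightarrow> cl m = m" by (auto simp: cl_def)
lemma cl_cont: "continuous_on UNIV cl" unfolding cl_def by (intro continuous_intros)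

lemma g_cont: "L \<ge> 0 \<Longrightarrow> continuous_on D (g L)"
  unfolding g_def
  by (intro cont_ht continuous_intros ballI den_ne) auto

lemma gcl_cont: "L \<ge> 0 \<Longrightarrow> continuous_on UNIV (\<lambda>m. g L (cl m))"
  by (rule continuous_on_compose2[OF g_cont cl_cont]) (use cl_D in auto)

lemma gcl_meas: "L \<ge> 0 \<Longrightarrow> (\<lambda>m. g L (cl m)) \<in> borel_measurable (N L')"
  using borel_measurable_continuous_onI[OF gcl_cont]
  by (simp add: N_def measurable_cong_sets[OF sets_interval_measure refl])

lemma g_bound: assumes "L \<ge> 0" obtains B where "\<And>m. \<bar>g L (cl m)\<bar> \<le> B"
proof -
  have "bounded (g L ` D)"
    by (rule compact_imp_bounded[OF compact_continuous_image[OF g_cont[OF assms]]]) simp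
  then obtain B where "\<forall>x\<in>g L ` D. norm x \<le> B" unfolding bounded_iff by blast
  then have "\<And>m. \<bar>g L (cl m)\<bar> \<le> B" using cl_D by auto
  then show ?thesis by (rule that)
qed

lemma ht_bounds: assumes m: "m \<in> D" shows "T' \<le> h m / m" "h m / m \<le> T"
proof -
  have a: "mu_min \<in> D" "mu_max \<in> D" using mu_bounds by auto
  show "T' \<le> h m / m"
  proof (cases "m = mu_max")
    case False
    then have "m < mu_max" using m by auto
    then show ?thesis using ht_strict_dec m a unfolding T'_def by (meson less_imp_le)
  qed (simp add: T'_def)
  show "h m / m \<le> T"
  proof (cases "m = mu_min")
    case False
    then have "mu_min < m" using m by auto
    then show ?thesis using ht_strict_dec m a unfolding T_def by (meson less_imp_le)
  qed (simp add: T_def)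
qed

lemma alg_id: fixes m b L a t :: real
  assumes "1 + L * t \<noteq> 0" "1 + a * t \<noteq> 0"
  shows "m * (1 - b * L * t) / (1 + L * t) - m * (1 - b * a * t) / (1 + a * t)
    = m * (1 + b) * t * (a - L) / ((1 + L * t) * (1 + a * t))"
  using assms by (simp add: divide_simps) (simp add: algebra_simps)

lemma g_lip: assumes L: "L \<ge> 0" and a: "a \<ge> 0" and m: "m \<in> D"
  shows "\<bar>g L m - g a m\<bar> \<le> mu_max * (1 + beta) * T * \<bar>L - a\<bar>"
proof -
  define t where "t = h m / m"
  have t: "t > 0" "t \<le> T" using ht_pos[OF m] ht_bounds[OF m] t_def by auto
  have d1: "1 + L * t \<ge> 1" and d2: "1 + a * t \<ge> 1" using t L a by auto
  have eq: "g L m - g a m = m * (1 + beta) * t * (a - L) / ((1 + L * t) * (1 + a * t))"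
    unfolding g_def t_def[symmetric] using d1 d2 by (intro alg_id) auto
  have "\<bar>g L m - g a m\<bar> = \<bar>m * (1 + beta) * t * (a - L)\<bar> / ((1 + L * t) * (1 + a * t))"
    unfolding eq using d1 d2 by (simp add: abs_mult)
  also have "\<dots> \<le> \<bar>m * (1 + beta) * t * (a - L)\<bar>"
  proof -
    have "1 * 1 \<le> (1 + L * t) * (1 + a * t)" using mult_mono[OF d1 d2] d1 by simp
    then show ?thesis using divide_left_mono[of 1 "(1 + L * t) * (1 + a * t)" "\<bar>m * (1 + beta) * t * (a - L)\<bar>"]
      by simp
  qed
  also have "\<dots> = m * (1 + beta) * t * \<bar>L - a\<bar>"
    using m mu_bounds beta_pos t by (simp add: abs_mult abs_minus_commute)
  also have "\<dots> \<le> mu_max * (1 + beta) * T * \<bar>L - a\<bar>"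
    using m mu_bounds beta_pos t by (intro mult_right_mono mult_mono) auto
  finally show ?thesis .
qed

end

context p2setup begin

lemma N_rd: "L > 0 \<Longrightarrow> real_distribution (N L)"
  unfolding N_def by (rule N_real_dist)

lemma N_cdf': "L > 0 \<Longrightarrow> measure (N L) {..x} = G L x"
  using N_cdf[of L] unfolding N_def cdf_def by metis

lemma gcl_int: assumes "L \<ge> 0" "L' > 0" shows "integrable (N L') (\<lambda>m. g L (cl m))"
proof -
  interpret R: real_distribution "N L'" using N_rd assms by auto
  obtain B where B: "\<And>m. \<bar>g L (cl m)\<bar> \<le> B" using g_bound assms by blast
  show ?thesis by (rule R.integrable_const_bound[where B=B]) (use B gcl_meas assms in auto)
qed

lemma AE_D: assumes L: "L > 0" shows "AE m in N L. m \<in> D"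
proof -
  interpret R: real_distribution "N L" using N_rd L by auto
  have U: "{..<mu_min} = (\<Union>n. {..mu_min - inverse (real (Suc n))})"
  proof (intro set_eqI iffI)
    fix m assume "m \<in> {..<mu_min}"
    then obtain n where "inverse (real (Suc n)) < mu_min - m"
      using reals_Archimedean[of "mu_min - m"] by auto
    then have "m \<le> mu_min - inverse (real (Suc n))" by linarith
    then show "m \<in> (\<Union>n. {..mu_min - inverse (real (Suc n))})" by blast
  next
    fix m assume "m \<in> (\<Union>n. {..mu_min - inverse (real (Suc n))})"
    then obtain n where "m \<le> mu_min - inverse (real (Suc n))" by auto
    moreover have "inverse (real (Suc n)) > 0" by simp
    ultimately have "m < mu_min" by linarith
    then show "m \<in> {..<mu_min}" by simp
  qed
  have "emeasure (N L) {..<mu_min} = 0"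
    unfolding U
  proof (rule emeasure_UN_eq_0)
    fix n
    have "measure (N L) {..mu_min - inverse (real (Suc n))} = 0"
      unfolding N_cdf'[OF L] by (rule G_low) simp
    then show "emeasure (N L) {..mu_min - inverse (real (Suc n))} = 0"
      by (simp add: R.emeasure_eq_measure)
  qed (auto simp: N_def)
  then have ae1: "AE m in N L. m \<notin> {..<mu_min}"
    by (intro AE_I'[of "{..<mu_min}"]) (auto simp: N_def)
  have "measure (N L) (space (N L) - {..mu_max}) = 1 - measure (N L) {..mu_max}"
    by (rule R.prob_compl) (simp add: N_def)
  also have "\<dots> = 0" unfolding N_cdf'[OF L] by (simp add: G_high)
  moreover have "space (N L) - {..mu_max} = {mu_max<..}" by (auto simp: N_def)
  ultimately have "measure (N L) {mu_max<..} = 0" by simp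
  then have "emeasure (N L) {mu_max<..} = 0"
    by (simp add: R.emeasure_eq_measure)
  then have ae2: "AE m in N L. m \<notin> {mu_max<..}"
    by (intro AE_I'[of "{mu_max<..}"]) (auto simp: N_def)
  show ?thesis using ae1 ae2 by eventually_elim auto
qed

lemma Phi_eq: assumes L: "L > 0"
  shows "(LINT m:D | stieltjes_measure (F1 M mmin mmax A (\<lambda>mu. Cthr f' (\<lambda>m. h m / m) ht' c' mu L)).
              m * (1 - beta * L * (h m / m)) / (1 + L * (h m / m))) = I L L"
proof -
  have CC: "(\<lambda>mu. Cthr f' (\<lambda>m. h m / m) ht' c' mu L) = C L" by (simp add: C_def fun_eq_iff)
  have "(LINT m:D | N L. g L m) = integral\<^sup>L (N L) (\<lambda>m. indicator D m * g L (cl m))"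
    unfolding set_lebesgue_integral_def
    by (rule Bochner_Integration.integral_cong) (auto simp: cl_id indicator_def)
  also have "\<dots> = I L L"
    unfolding I_def
  proof (rule integral_cong_AE)
    show "(\<lambda>m. indicator D m * g L (cl m)) \<in> borel_measurable (N L)"
      using gcl_meas[of L L] L by (intro borel_measurable_times) (auto simp: N_def)
    show "(\<lambda>m. g L (cl m)) \<in> borel_measurable (N L)" using gcl_meas[of L L] L by auto
    show "AE m in N L. indicator D m * g L (cl m) = g L (cl m)"
      using AE_D[OF L] by eventually_elim auto
  qed
  finally show ?thesis
    unfolding CC stieltjes_eq[OF L] N_def[symmetric] g_def .
qed

end

context p2setup begin

lemma I_cont: "continuous_on {0<..} (\<lambda>L. I L L)"
proof (rule continuous_on_sequentiallyI)
  fix u :: "nat \<Rightarrow> real" and a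
  assume u: "\<forall>n. u n \<in> {0<..}" and a: "a \<in> {0<..}" and lim: "u \<longlonglongrightarrow> a"
  have upos: "\<And>n. u n > 0" using u by auto
  have apos: "a > 0" using a by auto
  obtain B where B: "\<And>m. \<bar>g a (cl m)\<bar> \<le> B" using g_bound[of a] apos by auto
  have step1: "(\<lambda>n. I a (u n)) \<longlonglongrightarrow> I a a"
    unfolding I_def
  proof (rule weak_conv_imp_integral_bdd_continuous_conv[where B=B])
    show "real_distribution (N (u n))" for n by (rule N_rd[OF upos])
    show "real_distribution (N a)" by (rule N_rd[OF apos])
    show "weak_conv_m (\<lambda>n. N (u n)) (N a)"
      unfolding weak_conv_m_def weak_conv_def
    proof (intro allI impI)
      fix x
      have c1: "cdf (N (u n)) = G (u n)" for n unfolding N_def by (rule N_cdf[OF upos])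
      have c2: "cdf (N a) = G a" unfolding N_def by (rule N_cdf[OF apos])
      have "(\<lambda>n. G (u n) x) \<longlonglongrightarrow> G a x" by (rule G_cont_L[OF lim _ apos]) (use upos in blast)
      then show "(\<lambda>n. cdf (N (u n)) x) \<longlonglongrightarrow> cdf (N a) x" unfolding c1 c2 .
    qed
    have cc: "continuous_on UNIV (\<lambda>m. g a (cl m))" using gcl_cont[of a] apos by (simp add: less_imp_le)
    show "isCont (\<lambda>m. g a (cl m)) x" for x
      using continuous_on_eq_continuous_at[OF open_UNIV] cc by blast
    show "norm (g a (cl x)) \<le> B" for x using B by simp
  qed
  define K where "K = mu_max * (1 + beta) * T"
  have bnd: "norm (I (u n) (u n) - I a (u n)) \<le> K * \<bar>u n - a\<bar>" for n
  proof -
    interpret R: real_distribution "N (u n)" by (rule N_rd[OF upos])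
    have i1: "integrable (N (u n)) (\<lambda>m. g (u n) (cl m))" by (rule gcl_int) (use upos[of n] in auto)
    have i2: "integrable (N (u n)) (\<lambda>m. g a (cl m))" by (rule gcl_int) (use upos[of n] apos in auto)
    have eq: "I (u n) (u n) - I a (u n) = integral\<^sup>L (N (u n)) (\<lambda>m. g (u n) (cl m) - g a (cl m))"
      unfolding I_def by (rule Bochner_Integration.integral_diff[symmetric, OF i1 i2])
    have pw: "\<bar>g (u n) (cl m) - g a (cl m)\<bar> \<le> K * \<bar>u n - a\<bar>" for m
      unfolding K_def by (rule g_lip[OF _ _ cl_D]) (use upos[of n] apos in auto)
    have hi: "g (u n) (cl m) - g a (cl m) \<le> K * \<bar>u n - a\<bar>" for m
      using abs_le_D1[OF pw[of m]] .
    have lo: "- (K * \<bar>u n - a\<bar>) \<le> g (u n) (cl m) - g a (cl m)" for m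
      using abs_le_D2[OF pw[of m]] by linarith
    have up: "integral\<^sup>L (N (u n)) (\<lambda>m. g (u n) (cl m) - g a (cl m)) \<le> K * \<bar>u n - a\<bar>"
      by (rule R.integral_le_const[OF Bochner_Integration.integrable_diff[OF i1 i2]]) (use hi in auto)
    have dn: "- (K * \<bar>u n - a\<bar>) \<le> integral\<^sup>L (N (u n)) (\<lambda>m. g (u n) (cl m) - g a (cl m))"
      by (rule R.integral_ge_const[OF Bochner_Integration.integrable_diff[OF i1 i2]]) (use lo in auto)
    show ?thesis unfolding eq using up dn by simp
  qed
  have l0: "(\<lambda>n. u n - a) \<longlonglongrightarrow> 0" by (rule LIM_zero[OF lim])
  have l1: "(\<lambda>n. \<bar>u n - a\<bar>) \<longlonglongrightarrow> 0" by (rule tendsto_rabs_zero[OF l0])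
  have l2: "(\<lambda>n. K * \<bar>u n - a\<bar>) \<longlonglongrightarrow> K * 0" by (rule tendsto_mult[OF tendsto_const l1])
  have l3: "(\<lambda>n. K * \<bar>u n - a\<bar>) \<longlonglongrightarrow> 0" using l2 by simp
  have "(\<lambda>n. I (u n) (u n) - I a (u n)) \<longlonglongrightarrow> 0"
    by (rule Lim_null_comparison[OF always_eventually l3]) (rule allI, rule bnd)
  from tendsto_add[OF this step1] have "(\<lambda>n. I (u n) (u n) - I a (u n) + I a (u n)) \<longlonglongrightarrow> 0 + I a a" .
  then show "(\<lambda>n. I (u n) (u n)) \<longlonglongrightarrow> I a a" by simp
qed

lemma T_pos: "T > 0" "T' > 0" "T' < T"
  using ht_pos[of mu_min] ht_pos[of mu_max] ht_strict_dec mu_bounds unfolding T_def T'_def by auto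

lemma I_pos: assumes L: "L > 0" and le: "beta * L * T \<le> 1"
  shows "I L L \<ge> mu_min * (1 - beta * L * T) / (1 + L * T)"
proof -
  interpret R: real_distribution "N L" using N_rd L by auto
  have pw: "mu_min * (1 - beta * L * T) / (1 + L * T) \<le> g L m" if m: "m \<in> D" for m
  proof -
    define t where "t = h m / m"
    have t: "t > 0" "t \<le> T" using ht_pos[OF m] ht_bounds[OF m] t_def by auto
    have "beta * L * t \<le> beta * L * T" using t L beta_pos by (simp add: mult_left_mono)
    then have n1: "0 \<le> 1 - beta * L * T" "1 - beta * L * T \<le> 1 - beta * L * t" using le by auto
    have num: "mu_min * (1 - beta * L * T) \<le> m * (1 - beta * L * t)"
      using n1 m mu_bounds by (intro mult_mono) auto
    have "0 \<le> mu_min * (1 - beta * L * T)" using n1 mu_bounds by simp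
    have "g L m = m * (1 - beta * L * t) / (1 + L * t)" unfolding g_def t_def ..
    moreover have "mu_min * (1 - beta * L * T) / (1 + L * T) \<le> m * (1 - beta * L * t) / (1 + L * t)"
      by (rule frac_le) (use num \<open>0 \<le> mu_min * (1 - beta * L * T)\<close> t L in \<open>auto intro: add_pos_pos mult_left_mono\<close>)
    ultimately show ?thesis by simp
  qed
  show ?thesis unfolding I_def
    by (rule R.integral_ge_const) (use gcl_int[of L L] L pw cl_D in auto)
qed

lemma I_neg: assumes L: "L > 0" and ge: "beta * L * T' \<ge> 1"
  shows "I L L \<le> mu_min * (1 - beta * L * T') / (1 + L * T)"
proof -
  interpret R: real_distribution "N L" using N_rd L by auto
  have pw: "g L m \<le> mu_min * (1 - beta * L * T') / (1 + L * T)" if m: "m \<in> D" for m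
  proof -
    define t where "t = h m / m"
    have t: "t > 0" "t \<le> T" "T' \<le> t" using ht_pos[OF m] ht_bounds[OF m] t_def by auto
    have "beta * L * T' \<le> beta * L * t" using t L beta_pos by (simp add: mult_left_mono)
    then have n1: "0 \<le> beta * L * T' - 1" "beta * L * T' - 1 \<le> beta * L * t - 1" using ge by auto
    have num: "mu_min * (beta * L * T' - 1) \<le> m * (beta * L * t - 1)"
      using n1 m mu_bounds by (intro mult_mono) auto
    have "0 \<le> mu_min * (beta * L * T' - 1)" using n1 mu_bounds by simp
    have A: "mu_min * (beta * L * T' - 1) / (1 + L * T) \<le> m * (beta * L * t - 1) / (1 + L * t)"
      by (rule frac_le) (use num \<open>0 \<le> mu_min * (beta * L * T' - 1)\<close> t L in \<open>auto intro: add_pos_pos mult_left_mono\<close>)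
    have B: "g L m = - (m * (beta * L * t - 1) / (1 + L * t))" unfolding g_def t_def
      by (simp add: algebra_simps minus_divide_left)
    have C: "mu_min * (1 - beta * L * T') / (1 + L * T) = - (mu_min * (beta * L * T' - 1) / (1 + L * T))"
      by (simp add: algebra_simps minus_divide_left)
    show ?thesis by (subst B, subst C, rule le_imp_neg_le[OF A])
  qed
  show ?thesis unfolding I_def
    by (rule R.integral_le_const) (use gcl_int[of L L] L pw cl_D in auto)
qed

end

theorem proposition2:
  fixes M :: "'w measure"
    and mmin mmax A :: "'w \<Rightarrow> real"
    and mu_min mu_max beta a_min a_max c_min c_max :: real
    and f f' f'' c c' c'' h ht' ht'' :: "real \<Rightarrow> real"
  assumes mu_bounds: "0 < mu_min" "mu_min < mu_max"
    and beta_pos: "beta > 0"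
    and f_concave: "concave_on {0..1} f"
    and f_mono: "mono_on {0..1} f"
    and f_d1: "\<forall>x\<in>{0..1}. (f has_real_derivative f' x) (at x within {0..1})"
    and f_d2: "\<forall>x\<in>{0..1}. (f' has_real_derivative f'' x) (at x within {0..1})"
    and f_c2: "continuous_on {0..1} f''"
    and c_convex: "convex_on {mu_min..mu_max} c"
    and c_mono: "mono_on {mu_min..mu_max} c"
    and c_d1: "\<forall>x\<in>{mu_min..mu_max}. (c has_real_derivative c' x) (at x within {mu_min..mu_max})"
    and c_d2: "\<forall>x\<in>{mu_min..mu_max}. (c' has_real_derivative c'' x) (at x within {mu_min..mu_max})"
    and c_c2: "continuous_on {mu_min..mu_max} c''"
    and c'_bounds: "0 < c_min"
       "\<forall>x\<in>{mu_min..mu_max}. c_min \<le> c' x \<and> c' x \<le> c_max"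
    and h_pos: "\<forall>x\<in>{mu_min..mu_max}. h x > 0"
    and ht_d1: "\<forall>x\<in>{mu_min..mu_max}. ((\<lambda>m. h m / m) has_real_derivative ht' x) (at x within {mu_min..mu_max})"
    and ht_d2: "\<forall>x\<in>{mu_min..mu_max}. (ht' has_real_derivative ht'' x) (at x within {mu_min..mu_max})"
    and ht_convex: "convex_on {mu_min..mu_max} (\<lambda>m. h m / m)"
    and ht_strict_dec: "\<forall>x\<in>{mu_min..mu_max}. \<forall>y\<in>{mu_min..mu_max}. x < y \<longrightarrow> h y / y < h x / x"
    and ht_cond: "\<forall>x\<in>{mu_min..mu_max}. 2 * (ht' x)\<^sup>2 \<le> (h x / x) * ht'' x"
    and P: "prob_space M"
    and meas: "mmin \<in> borel_measurable M" "mmax \<in> borel_measurable M" "A \<in> borel_measurable M"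
    and triple_bounds: "AE w in M. mu_min \<le> mmin w \<and> mmin w \<le> mmax w \<and> mmax w \<le> mu_max"
    and a_bounds: "0 < a_min" "AE w in M. a_min \<le> A w \<and> A w \<le> a_max"
    and A_continuous: "\<forall>x. measure M {w \<in> space M. A w = x} = 0"
  defines "Phi \<equiv> \<lambda>L. LINT m:{mu_min..mu_max} |
              stieltjes_measure (F1 M mmin mmax A (\<lambda>mu. Cthr f' (\<lambda>m. h m / m) ht' c' mu L)).
              m * (1 - beta * L * (h m / m)) / (1 + L * (h m / m))"
  shows "(\<exists>L\<in>{1 / (beta * (h mu_min / mu_min)) .. 1 / (beta * (h mu_max / mu_max))}. Phi L = 0)
       \<and> (\<forall>L>0. Phi L = 0 \<longrightarrow> L \<in> {1 / (beta * (h mu_min / mu_min)) .. 1 / (beta * (h mu_max / mu_max))})"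
proof -
  have c'p: "\<forall>x\<in>{mu_min..mu_max}. 0 < c' x"
    using c'_bounds by (meson less_le_trans)
  interpret p2setup M mmin mmax A mu_min mu_max beta f f' f'' c c' c'' h ht' ht''
    by (rule p2setup.intro; (fact | rule c'p))
  have PhiI: "Phi L = I L L" if "L > 0" for L
    unfolding Phi_def by (rule Phi_eq[OF that])
  define Lmin where "Lmin = 1 / (beta * T)"
  define Lmax where "Lmax = 1 / (beta * T')"
  have iv: "{1 / (beta * (h mu_min / mu_min)) .. 1 / (beta * (h mu_max / mu_max))} = {Lmin..Lmax}"
    unfolding Lmin_def Lmax_def T_def T'_def ..
  have bT: "beta * T > 0" "beta * T' > 0" using beta_pos T_pos by auto
  have Lmin_pos: "Lmin > 0" unfolding Lmin_def using bT by simp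
  have "beta * T' \<le> beta * T" using T_pos beta_pos by (intro mult_left_mono) auto
  then have Lle: "Lmin \<le> Lmax" unfolding Lmin_def Lmax_def using bT
    by (intro frac_le) auto
  have Lmax_pos: "Lmax > 0" using Lmin_pos Lle by simp
  have e1: "beta * Lmin * T = 1" unfolding Lmin_def using bT T_pos beta_pos by simp
  have e2: "beta * Lmax * T' = 1" unfolding Lmax_def using bT T_pos beta_pos by simp
  have i1: "I Lmin Lmin \<ge> 0" using I_pos[OF Lmin_pos] e1 by simp
  have i2: "I Lmax Lmax \<le> 0" using I_neg[OF Lmax_pos] e2 by simp
  have cont: "continuous_on {Lmin..Lmax} (\<lambda>L. I L L)"
    by (rule continuous_on_subset[OF I_cont]) (use Lmin_pos in auto)
  obtain L where L: "Lmin \<le> L" "L \<le> Lmax" "I L L = 0"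
    using IVT2'[of "\<lambda>L. I L L" Lmax 0 Lmin, OF i2 i1 Lle cont] by blast
  have ex: "\<exists>L\<in>{Lmin..Lmax}. Phi L = 0"
    using L PhiI[of L] Lmin_pos by auto
  have un: "L \<in> {Lmin..Lmax}" if L: "L > 0" "Phi L = 0" for L
  proof (rule ccontr)
    assume "L \<notin> {Lmin..Lmax}"
    then consider "L < Lmin" | "L > Lmax" by force
    then show False
    proof cases
      case 1
      then have "L * (beta * T) < 1" unfolding Lmin_def using bT by (simp add: pos_less_divide_eq)
      then have "beta * L * T < 1" by (simp add: ac_simps)
      then have "I L L \<ge> mu_min * (1 - beta * L * T) / (1 + L * T)" using I_pos[OF L(1)] by simp
      moreover have "mu_min * (1 - beta * L * T) / (1 + L * T) > 0"
      proof (rule divide_pos_pos)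
        show "0 < mu_min * (1 - beta * L * T)" using \<open>beta * L * T < 1\<close> mu_bounds by simp
        show "0 < 1 + L * T" using T_pos L(1) by (simp add: add_pos_pos)
      qed
      ultimately show False using L PhiI[OF L(1)] by linarith
    next
      case 2
      then have "1 < L * (beta * T')" unfolding Lmax_def using bT by (simp add: pos_divide_less_eq)
      then have "beta * L * T' > 1" by (simp add: ac_simps)
      then have "I L L \<le> mu_min * (1 - beta * L * T') / (1 + L * T)" using I_neg[OF L(1)] by simp
      moreover have "mu_min * (1 - beta * L * T') / (1 + L * T) < 0"
      proof (rule divide_neg_pos)
        show "mu_min * (1 - beta * L * T') < 0" using \<open>beta * L * T' > 1\<close> mu_bounds by (simp add: mult_pos_neg)
        show "0 < 1 + L * T" using T_pos L(1) by (simp add: add_pos_pos)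
      qed
      ultimately show False using L PhiI[OF L(1)] by linarith
    qed
  qed
  show ?thesis unfolding iv using ex un by blast
qed

end
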